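(* Let $\alpha>0$, $\Omega=[0,1]^3$, and let $\boldsymbol m=(m_1,m_2,m_3)$ be a solution of $$\partial_t\boldsymbol m=-\boldsymbol m\times\Delta\boldsymbol m+\alpha\Delta\boldsymbol m+\alpha|\nabla\boldsymbol m|^2\boldsymbol m\ \text{ in }\Omega\times(0,T],\qquad\partial_{\mathbf n}\boldsymbol m=0\ \text{ on }\partial\Omega,$$ which is smooth up to the boundary (in particular $C^3$ in space up to $\partial\Omega$ with $\partial_z\partial_t\boldsymbol m$ continuous up to the boundary) and satisfies $|\boldsymbol m|=1$. Then $\partial_z^3\boldsymbol m=0$ on the boundary face $\{z=0\}$ (and analogously $\partial_x^3\boldsymbol m=0$ on $\{x=0\},\{x=1\}$, etc.). Consequently, for $h>0$ small and any fixed $x,y$, $\boldsymbol m(x,y,-\tfrac h2,t)=\boldsymbol m(x,y,\tfrac h2,t)+\mathcal O(h^5)$, where $\boldsymbol m$ is smoothly extended beyond the boundary.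
   Context: $|\nabla\boldsymbol m|^2=\sum_{i=1}^3|\nabla m_i|^2$; $\mathbf n$ is the outward unit normal. *)

theory Defs
  imports "HOL-Analysis.Analysis" "HOL-Library.Landau_Symbols"
begin

fun Ck_on :: "nat \<Rightarrow> 'a::real_normed_vector set \<Rightarrow> ('a \<Rightarrow> 'b::real_normed_vector) \<Rightarrow> bool" where
  "Ck_on 0 U f = continuous_on U f"
| "Ck_on (Suc k) U f =
     (\<exists>f'. (\<forall>x\<in>U. (f has_derivative f' x) (at x)) \<and> (\<forall>v. Ck_on k U (\<lambda>x. f' x v)))"

definition smooth_on :: "'a::real_normed_vector set \<Rightarrow> ('a \<Rightarrow> 'b::real_normed_vector) \<Rightarrow> bool" where
  "smooth_on U f \<longleftrightarrow> (\<forall>k. Ck_on k U f)"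

type_synonym field4 = "real \<Rightarrow> real \<Rightarrow> real \<Rightarrow> real \<Rightarrow> real^3"

definition dX :: "field4 \<Rightarrow> field4" where
  "dX m = (\<lambda>x y z t. vector_derivative (\<lambda>s. m s y z t) (at x))"
definition dY :: "field4 \<Rightarrow> field4" where
  "dY m = (\<lambda>x y z t. vector_derivative (\<lambda>s. m x s z t) (at y))"
definition dZ :: "field4 \<Rightarrow> field4" where
  "dZ m = (\<lambda>x y z t. vector_derivative (\<lambda>s. m x y s t) (at z))"
definition dT :: "field4 \<Rightarrow> field4" where
  "dT m = (\<lambda>x y z t. vector_derivative (\<lambda>s. m x y z s) (at t))"

definition lap :: "field4 \<Rightarrow> field4" where
  "lap m = (\<lambda>x y z t. dX (dX m) x y z t + dY (dY m) x y z t + dZ (dZ m) x y z t)"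

definition grad_sq :: "field4 \<Rightarrow> real \<Rightarrow> real \<Rightarrow> real \<Rightarrow> real \<Rightarrow> real" where
  "grad_sq m = (\<lambda>x y z t. (norm (dX m x y z t))\<^sup>2 + (norm (dY m x y z t))\<^sup>2 + (norm (dZ m x y z t))\<^sup>2)"

definition unit_cube :: "(real \<times> real \<times> real) set" where
  "unit_cube = {0..1} \<times> {0..1} \<times> {0..1}"

end

theory Submission
  imports Defs
begin

definition DD :: "'a::real_normed_vector \<Rightarrow> ('a \<Rightarrow> 'b::real_normed_vector) \<Rightarrow> 'a \<Rightarrow> 'b" where
  "DD v f p = frechet_derivative f (at p) v"

lemma Ck_on_cong:
  assumes "open U" "\<forall>x\<in>U. f x = g x" "Ck_on k U f"
  shows "Ck_on k U g"
  using assms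
proof (induction k arbitrary: f g)
  case 0
  then show ?case using continuous_on_cong[of U U f g] by simp
next
  case (Suc k)
  then obtain f' where f': "\<forall>x\<in>U. (f has_derivative f' x) (at x)" "\<forall>v. Ck_on k U (\<lambda>x. f' x v)"
    by (simp only: Ck_on.simps) blast
  have "\<forall>x\<in>U. (g has_derivative f' x) (at x)"
  proof
    fix x assume x: "x \<in> U"
    show "(g has_derivative f' x) (at x)"
      using has_derivative_transform_within_open[of f "f' x" x UNIV U g] f'(1) x Suc.prems by auto
  qed
  then show ?case using f'(2) by (simp only: Ck_on.simps) blast
qed

lemma smooth_on_cong:
  "open U \<Longrightarrow> \<forall>x\<in>U. f x = g x \<Longrightarrow> smooth_on U f \<Longrightarrow> smooth_on U g"
  unfolding smooth_on_def using Ck_on_cong by blast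

lemma smooth_deriv:
  assumes "smooth_on U f" "x \<in> U"
  shows "(f has_derivative frechet_derivative f (at x)) (at x)"
proof -
  have "Ck_on (Suc 0) U f" using assms unfolding smooth_on_def by blast
  then obtain f' where "\<forall>x\<in>U. (f has_derivative f' x) (at x)" by (simp only: Ck_on.simps) blast
  then show ?thesis using assms(2) frechet_derivative_at by metis
qed

lemma smooth_cont:
  assumes "smooth_on U f" shows "continuous_on U f"
proof -
  have "Ck_on 0 U f" using assms unfolding smooth_on_def by blast
  then show ?thesis by simp
qed

lemma smooth_DD:
  assumes "open U" "smooth_on U f"
  shows "smooth_on U (DD v f)"
  unfolding smooth_on_def
proof
  fix k
  have "Ck_on (Suc k) U f" using assms unfolding smooth_on_def by blast
  then obtain f' where f': "\<forall>x\<in>U. (f has_derivative f' x) (at x)" "\<forall>v. Ck_on k U (\<lambda>x. f' x v)"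
    by (simp only: Ck_on.simps) blast
  have eq: "\<forall>x\<in>U. f' x v = DD v f x"
    using f'(1) frechet_derivative_at unfolding DD_def by metis
  show "Ck_on k U (DD v f)" using Ck_on_cong[OF assms(1) eq f'(2)[rule_format, of v]] .
qed

lemma smooth_line:
  assumes "smooth_on U F" "p \<in> U"
  shows "((\<lambda>s. F (p + (s - s0) *\<^sub>R e)) has_vector_derivative DD e F p) (at s0)"
proof -
  have d1: "((\<lambda>s. p + (s - s0) *\<^sub>R e) has_derivative (\<lambda>h. h *\<^sub>R e)) (at s0)"
    by (auto intro!: derivative_eq_intros simp: algebra_simps)
  have d2: "(F has_derivative frechet_derivative F (at p)) (at ((\<lambda>s. p + (s - s0) *\<^sub>R e) s0))"
    using smooth_deriv[OF assms] by simp
  have "((F \<circ> (\<lambda>s. p + (s - s0) *\<^sub>R e)) has_derivative (frechet_derivative F (at p) \<circ> (\<lambda>h. h *\<^sub>R e))) (at s0)"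
    by (rule diff_chain_at[OF d1 d2])
  moreover have "bounded_linear (frechet_derivative F (at p))"
    using smooth_deriv[OF assms] has_derivative_bounded_linear by blast
  ultimately show ?thesis
    unfolding has_vector_derivative_def DD_def
    by (simp add: o_def linear_simps)
qed

lemma open_line:
  fixes p e :: "'a::real_normed_vector"
  assumes "open U" "p \<in> U"
  shows "\<exists>d>0. \<forall>s. \<bar>s\<bar> \<le> d \<longrightarrow> p + s *\<^sub>R e \<in> U"
proof -
  have "open {s::real. p + s *\<^sub>R e \<in> U}"
  proof -
    have "continuous_on UNIV (\<lambda>s::real. p + s *\<^sub>R e)" by (intro continuous_intros)
    then show ?thesis using open_vimage[OF assms(1), of "\<lambda>s. p + s *\<^sub>R e"] by (simp add: vimage_def)
  qed
  moreover have "0 \<in> {s::real. p + s *\<^sub>R e \<in> U}" using assms by simp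
  ultimately obtain r where r: "r > 0" "ball 0 r \<subseteq> {s::real. p + s *\<^sub>R e \<in> U}"
    using open_contains_ball by blast
  show ?thesis
    apply (rule exI[of _ "r/2"]) using r by (auto simp: dist_real_def subset_iff)
qed

lemma clairaut:
  fixes g ga gb gab gba :: "real \<Rightarrow> real \<Rightarrow> real"
  assumes r: "r > 0"
  and da: "\<And>a b. \<bar>a\<bar> < r \<Longrightarrow> \<bar>b\<bar> < r \<Longrightarrow> ((\<lambda>s. g s b) has_real_derivative ga a b) (at a)"
  and db: "\<And>a b. \<bar>a\<bar> < r \<Longrightarrow> \<bar>b\<bar> < r \<Longrightarrow> ((\<lambda>s. g a s) has_real_derivative gb a b) (at b)"
  and dab: "\<And>a b. \<bar>a\<bar> < r \<Longrightarrow> \<bar>b\<bar> < r \<Longrightarrow> ((\<lambda>s. ga a s) has_real_derivative gab a b) (at b)"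
  and dba: "\<And>a b. \<bar>a\<bar> < r \<Longrightarrow> \<bar>b\<bar> < r \<Longrightarrow> ((\<lambda>s. gb s b) has_real_derivative gba a b) (at a)"
  and cab: "isCont (\<lambda>z. gab (fst z) (snd z)) (0,0)"
  and cba: "isCont (\<lambda>z. gba (fst z) (snd z)) (0,0)"
  shows "gab 0 0 = gba 0 0"
proof (rule ccontr)
  assume ne: "gab 0 0 \<noteq> gba 0 0"
  define \<epsilon> where "\<epsilon> = \<bar>gab 0 0 - gba 0 0\<bar> / 2"
  have \<epsilon>: "\<epsilon> > 0" using ne by (simp add: \<epsilon>_def)
  obtain d1 where d1: "d1>0" "\<forall>z. dist z (0,0) < d1 \<longrightarrow> dist (gab (fst z) (snd z)) (gab 0 0) < \<epsilon>"
    using cab[unfolded continuous_at_eps_delta] \<epsilon> by fastforce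
  obtain d2 where d2: "d2>0" "\<forall>z. dist z (0,0) < d2 \<longrightarrow> dist (gba (fst z) (snd z)) (gba 0 0) < \<epsilon>"
    using cba[unfolded continuous_at_eps_delta] \<epsilon> by fastforce
  define h where "h = min r (min d1 d2) / 3"
  have h: "0 < h" "h < r" "2*h < d1" "2*h < d2" using r d1 d2 by (auto simp: h_def)
  have near: "dist (s,u) (0,0) < d1 \<and> dist (s,u) (0,0) < d2"
    if "0 \<le> s" "s \<le> h" "0 \<le> u" "u \<le> h" for s u :: real
  proof -
    have "dist (s,u) (0,0) = sqrt (s\<^sup>2 + u\<^sup>2)" by (simp add: dist_Pair_Pair dist_real_def)
    also have "\<dots> \<le> s + u" using that by (intro sqrt_sum_squares_le_sum) auto
    finally show ?thesis using that h by auto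
  qed
  have inr: "\<bar>s\<bar> < r" if "0 \<le> s" "s \<le> h" for s using that h by auto
  have "\<And>x. 0 \<le> x \<Longrightarrow> x \<le> h \<Longrightarrow> ((\<lambda>s. g s h - g s 0) has_real_derivative ga x h - ga x 0) (at x)"
    using h by (intro DERIV_diff da inr) auto
  from MVT2[OF h(1) this] obtain \<xi> where \<xi>: "0 < \<xi>" "\<xi> < h" "(g h h - g h 0) - (g 0 h - g 0 0) = (h - 0) * (ga \<xi> h - ga \<xi> 0)"
    by (auto simp: algebra_simps)
  have "\<And>x. 0 \<le> x \<Longrightarrow> x \<le> h \<Longrightarrow> ((\<lambda>s. ga \<xi> s) has_real_derivative gab \<xi> x) (at x)"
    using h \<xi> by (intro dab inr) auto
  from MVT2[OF h(1) this] obtain \<eta> where \<eta>: "0 < \<eta>" "\<eta> < h" "ga \<xi> h - ga \<xi> 0 = (h - 0) * gab \<xi> \<eta>"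
    by auto
  have "\<And>x. 0 \<le> x \<Longrightarrow> x \<le> h \<Longrightarrow> ((\<lambda>s. g h s - g 0 s) has_real_derivative gb h x - gb 0 x) (at x)"
    using h by (intro DERIV_diff db inr) auto
  from MVT2[OF h(1) this] obtain \<zeta> where \<zeta>: "0 < \<zeta>" "\<zeta> < h" "(g h h - g 0 h) - (g h 0 - g 0 0) = (h - 0) * (gb h \<zeta> - gb 0 \<zeta>)"
    by (auto simp: algebra_simps)
  have "\<And>x. 0 \<le> x \<Longrightarrow> x \<le> h \<Longrightarrow> ((\<lambda>s. gb s \<zeta>) has_real_derivative gba x \<zeta>) (at x)"
    using h \<zeta> by (intro dba inr) auto
  from MVT2[OF h(1) this] obtain \<theta> where \<theta>: "0 < \<theta>" "\<theta> < h" "gb h \<zeta> - gb 0 \<zeta> = (h - 0) * gba \<theta> \<zeta>"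
    by auto
  have "h * (h * gab \<xi> \<eta>) = h * (h * gba \<theta> \<zeta>)"
    using \<xi>(3) \<eta>(3) \<zeta>(3) \<theta>(3) by (simp add: algebra_simps)
  then have eq: "gab \<xi> \<eta> = gba \<theta> \<zeta>" using h by simp
  have "dist (gab \<xi> \<eta>) (gab 0 0) < \<epsilon>" using d1(2) near[of \<xi> \<eta>] \<xi> \<eta> by auto
  moreover have "dist (gba \<theta> \<zeta>) (gba 0 0) < \<epsilon>" using d2(2) near[of \<theta> \<zeta>] \<theta> \<zeta> by auto
  ultimately have "\<bar>gab 0 0 - gba 0 0\<bar> < 2 * \<epsilon>" using eq by (auto simp: dist_real_def)
  then show False by (simp add: \<epsilon>_def)
qed

lemma DD_cong:
  assumes "open U" "p \<in> U" "\<forall>q\<in>U. f q = g q" "smooth_on U g"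
  shows "DD v f p = DD v g p"
proof -
  have "(g has_derivative frechet_derivative g (at p)) (at p)" using smooth_deriv assms by blast
  then have "(f has_derivative frechet_derivative g (at p)) (at p)"
    using has_derivative_transform_within_open[of g _ p UNIV U f] assms by auto
  then show ?thesis unfolding DD_def using frechet_derivative_at by metis
qed

lemma open_plane:
  fixes p a b :: "'a::real_normed_vector"
  assumes "open U" "p \<in> U"
  shows "\<exists>r>0. \<forall>s u. \<bar>s\<bar> < r \<longrightarrow> \<bar>u\<bar> < r \<longrightarrow> p + s *\<^sub>R a + u *\<^sub>R b \<in> U"
proof -
  obtain e where e: "e > 0" "ball p e \<subseteq> U" using assms open_contains_ball by blast
  define r where "r = e / (norm a + norm b + 1)"
  have r: "r > 0" using e by (simp add: r_def add_nonneg_pos)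
  have "p + s *\<^sub>R a + u *\<^sub>R b \<in> U" if "\<bar>s\<bar> < r" "\<bar>u\<bar> < r" for s u
  proof -
    have "norm (s *\<^sub>R a + u *\<^sub>R b) \<le> \<bar>s\<bar> * norm a + \<bar>u\<bar> * norm b"
      by (metis norm_scaleR norm_triangle_ineq)
    also have "\<dots> \<le> r * norm a + r * norm b"
      using that by (intro add_mono mult_right_mono) auto
    also have "\<dots> < r * (norm a + norm b + 1)" using r by (simp add: algebra_simps)
    also have "\<dots> = e"
    proof -
      have pos: "norm a + norm b + 1 > 0" by (simp add: add_nonneg_pos)
      then show ?thesis unfolding r_def by simp
    qed
    finally have "dist p (p + s *\<^sub>R a + u *\<^sub>R b) < e"
      using norm_minus_cancel[of "s *\<^sub>R a + u *\<^sub>R b"] by (simp add: dist_norm algebra_simps)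
    then show ?thesis using e by (auto simp: add.assoc)
  qed
  then show ?thesis using r by blast
qed

lemma DD_line_comp:
  fixes F :: "'a::real_normed_vector \<Rightarrow> real^3"
  assumes "smooth_on U F" "q \<in> U"
  shows "((\<lambda>s. F (q + (s - s0) *\<^sub>R e) $ i) has_real_derivative DD e F q $ i) (at s0)"
  unfolding has_real_derivative_iff_has_vector_derivative
  using bounded_linear.has_vector_derivative[OF bounded_linear_vec_nth smooth_line[OF assms]] .

lemma DD_sym:
  fixes F :: "'a::real_normed_vector \<Rightarrow> real^3"
  assumes U: "open U" and sm: "smooth_on U F" and p: "p \<in> U"
  shows "DD a (DD b F) p = DD b (DD a F) p"
proof -
  obtain r where r: "r > 0" "\<forall>s u. \<bar>s\<bar> < r \<longrightarrow> \<bar>u\<bar> < r \<longrightarrow> p + s *\<^sub>R a + u *\<^sub>R b \<in> U"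
    using open_plane[OF U p] by blast
  have smA: "smooth_on U (DD a F)" and smB: "smooth_on U (DD b F)"
    and smAB: "smooth_on U (DD b (DD a F))" and smBA: "smooth_on U (DD a (DD b F))"
    using smooth_DD[OF U] sm by blast+
  have cont: "isCont (\<lambda>z. G (p + fst z *\<^sub>R a + snd z *\<^sub>R b) $ i) (0,0)"
    if "smooth_on U G" for G :: "'a \<Rightarrow> real^3" and i
  proof -
    have "isCont G p" using smooth_cont[OF that] U p continuous_on_eq_continuous_at by blast
    then have g: "isCont G (p + fst (0::real,0::real) *\<^sub>R a + snd (0::real,0::real) *\<^sub>R b)" by simp
    have l: "isCont (\<lambda>z::real\<times>real. p + fst z *\<^sub>R a + snd z *\<^sub>R b) (0,0)" by (intro continuous_intros)
    have "isCont (\<lambda>z. G (p + fst z *\<^sub>R a + snd z *\<^sub>R b)) (0,0)" using isCont_o2[OF l g] .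
    then show ?thesis by (intro continuous_intros)
  qed
  show ?thesis
  proof (rule vec_eq_iff[THEN iffD2], rule allI)
    fix i
    have *: "p + s' *\<^sub>R a + u *\<^sub>R b = (p + s *\<^sub>R a + u *\<^sub>R b) + (s' - s) *\<^sub>R a"
      "p + s *\<^sub>R a + u' *\<^sub>R b = (p + s *\<^sub>R a + u *\<^sub>R b) + (u' - u) *\<^sub>R b" for s s' u u' :: real
      by (simp_all add: algebra_simps)
    have "(\<lambda>s u. DD b (DD a F) (p + s *\<^sub>R a + u *\<^sub>R b) $ i) 0 0 =
          (\<lambda>s u. DD a (DD b F) (p + s *\<^sub>R a + u *\<^sub>R b) $ i) 0 0"
    proof (rule clairaut[where g = "\<lambda>s u. F (p + s *\<^sub>R a + u *\<^sub>R b) $ i"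
          and ga = "\<lambda>s u. DD a F (p + s *\<^sub>R a + u *\<^sub>R b) $ i"
          and gb = "\<lambda>s u. DD b F (p + s *\<^sub>R a + u *\<^sub>R b) $ i"
          and gab = "\<lambda>s u. DD b (DD a F) (p + s *\<^sub>R a + u *\<^sub>R b) $ i"
          and gba = "\<lambda>s u. DD a (DD b F) (p + s *\<^sub>R a + u *\<^sub>R b) $ i", OF r(1)])
      fix s u :: real assume su: "\<bar>s\<bar> < r" "\<bar>u\<bar> < r"
      then have q: "p + s *\<^sub>R a + u *\<^sub>R b \<in> U" using r by blast
      have e1: "\<And>G. (\<lambda>s'. G (p + s' *\<^sub>R a + u *\<^sub>R b) $ i) = (\<lambda>s'. G ((p + s *\<^sub>R a + u *\<^sub>R b) + (s' - s) *\<^sub>R a) $ i)"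
        by (rule ext) (simp add: algebra_simps)
      have e2: "\<And>G. (\<lambda>u'. G (p + s *\<^sub>R a + u' *\<^sub>R b) $ i) = (\<lambda>u'. G ((p + s *\<^sub>R a + u *\<^sub>R b) + (u' - u) *\<^sub>R b) $ i)"
        by (rule ext) (simp add: algebra_simps)
      show "((\<lambda>s'. F (p + s' *\<^sub>R a + u *\<^sub>R b) $ i) has_real_derivative DD a F (p + s *\<^sub>R a + u *\<^sub>R b) $ i) (at s)"
        unfolding e1 by (rule DD_line_comp[OF sm q])
      show "((\<lambda>u'. F (p + s *\<^sub>R a + u' *\<^sub>R b) $ i) has_real_derivative DD b F (p + s *\<^sub>R a + u *\<^sub>R b) $ i) (at u)"
        unfolding e2 by (rule DD_line_comp[OF sm q])
      show "((\<lambda>u'. DD a F (p + s *\<^sub>R a + u' *\<^sub>R b) $ i) has_real_derivative DD b (DD a F) (p + s *\<^sub>R a + u *\<^sub>R b) $ i) (at u)"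
        unfolding e2 by (rule DD_line_comp[OF smA q])
      show "((\<lambda>s'. DD b F (p + s' *\<^sub>R a + u *\<^sub>R b) $ i) has_real_derivative DD a (DD b F) (p + s *\<^sub>R a + u *\<^sub>R b) $ i) (at s)"
        unfolding e1 by (rule DD_line_comp[OF smB q])
    next
      show "isCont (\<lambda>z. DD b (DD a F) (p + fst z *\<^sub>R a + snd z *\<^sub>R b) $ i) (0, 0)" by (rule cont[OF smAB])
      show "isCont (\<lambda>z. DD a (DD b F) (p + fst z *\<^sub>R a + snd z *\<^sub>R b) $ i) (0, 0)" by (rule cont[OF smBA])
    qed
    then show "DD a (DD b F) p $ i = DD b (DD a F) p $ i" by simp
  qed
qed

abbreviation unc :: "field4 \<Rightarrow> real \<times> real \<times> real \<times> real \<Rightarrow> real^3" where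
  "unc m \<equiv> (\<lambda>(x, y, z, t). m x y z t)"

definition "eX = ((1::real), (0::real), (0::real), (0::real))"
definition "eY = ((0::real), (1::real), (0::real), (0::real))"
definition "eZ = ((0::real), (0::real), (1::real), (0::real))"
definition "eT = ((0::real), (0::real), (0::real), (1::real))"

lemma hvdX:
  assumes "smooth_on U (unc m)" "(x,y,z,t) \<in> U"
  shows "((\<lambda>s. m s y z t) has_vector_derivative DD eX (unc m) (x,y,z,t)) (at x)"
proof -
  have "(\<lambda>s. m s y z t) = (\<lambda>s. unc m ((x,y,z,t) + (s - x) *\<^sub>R eX))" by (auto simp: eX_def)
  then show ?thesis using smooth_line[OF assms] by simp
qed
lemma hvdY:
  assumes "smooth_on U (unc m)" "(x,y,z,t) \<in> U"
  shows "((\<lambda>s. m x s z t) has_vector_derivative DD eY (unc m) (x,y,z,t)) (at y)"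
proof -
  have "(\<lambda>s. m x s z t) = (\<lambda>s. unc m ((x,y,z,t) + (s - y) *\<^sub>R eY))" by (auto simp: eY_def)
  then show ?thesis using smooth_line[OF assms] by simp
qed
lemma hvdZ:
  assumes "smooth_on U (unc m)" "(x,y,z,t) \<in> U"
  shows "((\<lambda>s. m x y s t) has_vector_derivative DD eZ (unc m) (x,y,z,t)) (at z)"
proof -
  have "(\<lambda>s. m x y s t) = (\<lambda>s. unc m ((x,y,z,t) + (s - z) *\<^sub>R eZ))" by (auto simp: eZ_def)
  then show ?thesis using smooth_line[OF assms] by simp
qed
lemma hvdT:
  assumes "smooth_on U (unc m)" "(x,y,z,t) \<in> U"
  shows "((\<lambda>s. m x y z s) has_vector_derivative DD eT (unc m) (x,y,z,t)) (at t)"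
proof -
  have "(\<lambda>s. m x y z s) = (\<lambda>s. unc m ((x,y,z,t) + (s - t) *\<^sub>R eT))" by (auto simp: eT_def)
  then show ?thesis using smooth_line[OF assms] by simp
qed

lemma relX: "smooth_on U (unc m) \<Longrightarrow> \<forall>q\<in>U. unc (dX m) q = DD eX (unc m) q"
  using hvdX by (auto simp: dX_def vector_derivative_at)
lemma relY: "smooth_on U (unc m) \<Longrightarrow> \<forall>q\<in>U. unc (dY m) q = DD eY (unc m) q"
  using hvdY by (auto simp: dY_def vector_derivative_at)
lemma relZ: "smooth_on U (unc m) \<Longrightarrow> \<forall>q\<in>U. unc (dZ m) q = DD eZ (unc m) q"
  using hvdZ by (auto simp: dZ_def vector_derivative_at)
lemma relT: "smooth_on U (unc m) \<Longrightarrow> \<forall>q\<in>U. unc (dT m) q = DD eT (unc m) q"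
  using hvdT by (auto simp: dT_def vector_derivative_at)

lemma vdX: "smooth_on U (unc m) \<Longrightarrow> (x,y,z,t) \<in> U \<Longrightarrow>
    ((\<lambda>s. m s y z t) has_vector_derivative dX m x y z t) (at x)"
  using hvdX relX by fastforce
lemma vdY: "smooth_on U (unc m) \<Longrightarrow> (x,y,z,t) \<in> U \<Longrightarrow>
    ((\<lambda>s. m x s z t) has_vector_derivative dY m x y z t) (at y)"
  using hvdY relY by fastforce
lemma vdZ: "smooth_on U (unc m) \<Longrightarrow> (x,y,z,t) \<in> U \<Longrightarrow>
    ((\<lambda>s. m x y s t) has_vector_derivative dZ m x y z t) (at z)"
  using hvdZ relZ by fastforce
lemma vdT: "smooth_on U (unc m) \<Longrightarrow> (x,y,z,t) \<in> U \<Longrightarrow>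
    ((\<lambda>s. m x y z s) has_vector_derivative dT m x y z t) (at t)"
  using hvdT relT by fastforce

lemma smooth_rel:
  assumes "open U" "smooth_on U (unc m)" "\<forall>q\<in>U. unc (A m) q = DD e (unc m) q"
  shows "smooth_on U (unc (A m))"
proof -
  have eq: "\<forall>q\<in>U. DD e (unc m) q = unc (A m) q" using assms(3) by simp
  show ?thesis by (rule smooth_on_cong[OF assms(1) eq smooth_DD[OF assms(1,2)]])
qed

lemma smX: "open U \<Longrightarrow> smooth_on U (unc m) \<Longrightarrow> smooth_on U (unc (dX m))"
  using smooth_rel relX by blast
lemma smY: "open U \<Longrightarrow> smooth_on U (unc m) \<Longrightarrow> smooth_on U (unc (dY m))"
  using smooth_rel relY by blast
lemma smZ: "open U \<Longrightarrow> smooth_on U (unc m) \<Longrightarrow> smooth_on U (unc (dZ m))"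
  using smooth_rel relZ by blast
lemma smT: "open U \<Longrightarrow> smooth_on U (unc m) \<Longrightarrow> smooth_on U (unc (dT m))"
  using smooth_rel relT by blast

lemma sym_rel:
  assumes U: "open U" and sm: "smooth_on U (unc g)" and p: "p \<in> U"
    and rA: "\<And>h. smooth_on U (unc h) \<Longrightarrow> \<forall>q\<in>U. unc (A h) q = DD a (unc h) q"
    and rB: "\<And>h. smooth_on U (unc h) \<Longrightarrow> \<forall>q\<in>U. unc (B h) q = DD b (unc h) q"
  shows "unc (A (B g)) p = unc (B (A g)) p"
proof -
  have sA: "smooth_on U (unc (A g))" and sB: "smooth_on U (unc (B g))"
    using smooth_rel[OF U sm] rA rB sm by blast+
  have "unc (A (B g)) p = DD a (unc (B g)) p" using rA[OF sB] p by blast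
  also have "\<dots> = DD a (DD b (unc g)) p"
    using DD_cong[OF U p rB[OF sm] smooth_DD[OF U sm]] .
  also have "\<dots> = DD b (DD a (unc g)) p" using DD_sym[OF U sm p] .
  also have "\<dots> = DD b (unc (A g)) p"
    using DD_cong[OF U p rA[OF sm] smooth_DD[OF U sm]] by simp
  also have "\<dots> = unc (B (A g)) p" using rB[OF sA] p by simp
  finally show ?thesis .
qed

lemma symZX: "open U \<Longrightarrow> smooth_on U (unc g) \<Longrightarrow> (x,y,z,t) \<in> U \<Longrightarrow> dZ (dX g) x y z t = dX (dZ g) x y z t"
  using sym_rel[of U g "(x,y,z,t)" dZ eZ dX eX] relX relZ by auto
lemma symZY: "open U \<Longrightarrow> smooth_on U (unc g) \<Longrightarrow> (x,y,z,t) \<in> U \<Longrightarrow> dZ (dY g) x y z t = dY (dZ g) x y z t"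
  using sym_rel[of U g "(x,y,z,t)" dZ eZ dY eY] relY relZ by auto
lemma symZT: "open U \<Longrightarrow> smooth_on U (unc g) \<Longrightarrow> (x,y,z,t) \<in> U \<Longrightarrow> dZ (dT g) x y z t = dT (dZ g) x y z t"
  using sym_rel[of U g "(x,y,z,t)" dZ eZ dT eT] relT relZ by auto

lemma onesided_eq:
  fixes f g :: "real \<Rightarrow> 'a::real_normed_vector"
  assumes "a < b" "s0 \<in> {a..b}" "(f has_vector_derivative f') (at s0)"
    "(g has_vector_derivative g') (at s0)" "\<forall>s\<in>{a..b}. f s = g s"
  shows "f' = g'"
proof -
  have f: "(f has_vector_derivative f') (at s0 within cbox a b)"
    using has_vector_derivative_at_within[OF assms(3)] .
  have "(g has_vector_derivative g') (at s0 within cbox a b)"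
    using has_vector_derivative_at_within[OF assms(4)] .
  then have "(f has_vector_derivative g') (at s0 within cbox a b)"
    using has_vector_derivative_transform[of s0 "cbox a b" f g g'] assms(2,5) by auto
  then show ?thesis
    using vector_derivative_unique_within_closed_interval[OF assms(1) _ f] assms(2) by auto
qed

definition face0 :: "(real \<times> real \<times> real \<times> real) set \<Rightarrow> real \<Rightarrow> real \<Rightarrow> field4 \<Rightarrow> bool" where
  "face0 U T z0 g \<longleftrightarrow> (\<forall>x y t. x \<in> {0..1} \<and> y \<in> {0..1} \<and> t \<in> {0<..T} \<longrightarrow> (x,y,z0,t) \<in> U \<and> g x y z0 t = 0)"

lemma tanX:
  assumes sm: "smooth_on U (unc g)" and f: "face0 U T z0 g"
  shows "face0 U T z0 (dX g)"
  unfolding face0_def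
proof (intro allI impI conjI)
  fix x y t :: real assume a: "x \<in> {0..1} \<and> y \<in> {0..1} \<and> t \<in> {0<..T}"
  then show p: "(x,y,z0,t) \<in> U" using f unfolding face0_def by blast
  have d: "((\<lambda>s. g s y z0 t) has_vector_derivative dX g x y z0 t) (at x)" using vdX[OF sm p] .
  have z: "\<forall>s\<in>{0..1}. g s y z0 t = (\<lambda>s. 0) s" using f a unfolding face0_def by auto
  show "dX g x y z0 t = 0"
    using onesided_eq[of 0 1 x "\<lambda>s. g s y z0 t" "dX g x y z0 t" "\<lambda>s. 0" 0, OF _ _ d has_vector_derivative_const z] a
    by auto
qed

lemma tanY:
  assumes sm: "smooth_on U (unc g)" and f: "face0 U T z0 g"
  shows "face0 U T z0 (dY g)"
  unfolding face0_def
proof (intro allI impI conjI)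
  fix x y t :: real assume a: "x \<in> {0..1} \<and> y \<in> {0..1} \<and> t \<in> {0<..T}"
  then show p: "(x,y,z0,t) \<in> U" using f unfolding face0_def by blast
  have d: "((\<lambda>s. g x s z0 t) has_vector_derivative dY g x y z0 t) (at y)" using vdY[OF sm p] .
  have z: "\<forall>s\<in>{0..1}. g x s z0 t = (\<lambda>s. 0) s" using f a unfolding face0_def by auto
  show "dY g x y z0 t = 0"
    using onesided_eq[of 0 1 y "\<lambda>s. g x s z0 t" "dY g x y z0 t" "\<lambda>s. 0" 0, OF _ _ d has_vector_derivative_const z] a
    by auto
qed

lemma tanT:
  assumes sm: "smooth_on U (unc g)" and f: "face0 U T z0 g"
  shows "face0 U T z0 (dT g)"
  unfolding face0_def
proof (intro allI impI conjI)
  fix x y t :: real assume a: "x \<in> {0..1} \<and> y \<in> {0..1} \<and> t \<in> {0<..T}"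
  then show p: "(x,y,z0,t) \<in> U" using f unfolding face0_def by blast
  have d: "((\<lambda>s. g x y z0 s) has_vector_derivative dT g x y z0 t) (at t)" using vdT[OF sm p] .
  have z: "\<forall>s\<in>{t/2..T}. g x y z0 s = (\<lambda>s. 0) s" using f a unfolding face0_def by auto
  show "dT g x y z0 t = 0"
    using onesided_eq[of "t/2" T t "\<lambda>s. g x y z0 s" "dT g x y z0 t" "\<lambda>s. 0" 0, OF _ _ d has_vector_derivative_const z] a
    by auto
qed

lemma face_symX:
  assumes U: "open U" and sm: "smooth_on U (unc g)" and f: "face0 U T z0 (dX (dZ g))"
  shows "face0 U T z0 (dZ (dX g))"
  using f symZX[OF U sm] unfolding face0_def by metis
lemma face_symY:
  assumes U: "open U" and sm: "smooth_on U (unc g)" and f: "face0 U T z0 (dY (dZ g))"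
  shows "face0 U T z0 (dZ (dY g))"
  using f symZY[OF U sm] unfolding face0_def by metis
lemma face_symT:
  assumes U: "open U" and sm: "smooth_on U (unc g)" and f: "face0 U T z0 (dT (dZ g))"
  shows "face0 U T z0 (dZ (dT g))"
  using f symZT[OF U sm] unfolding face0_def by metis

lemma normsq_deriv:
  fixes f :: "real \<Rightarrow> real^3"
  assumes "(f has_vector_derivative f') (at s)"
  shows "((\<lambda>s. (norm (f s))\<^sup>2) has_vector_derivative (f s \<bullet> f' + f' \<bullet> f s)) (at s)"
proof -
  have "((\<lambda>s. f s \<bullet> f s) has_vector_derivative (f s \<bullet> f' + f' \<bullet> f s)) (at s)"
    using bounded_bilinear.has_vector_derivative[OF bounded_bilinear_inner assms assms] .
  then show ?thesis by (simp add: power2_norm_eq_inner)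
qed

lemma bb_cross: "bounded_bilinear cross3"
  using bilinear_cross bilinear_conv_bounded_bilinear by blast

lemma core:
  fixes m :: field4 and \<alpha> T z0 :: real and U :: "(real \<times> real \<times> real \<times> real) set"
  assumes alpha_pos: "\<alpha> > 0" and U_open: "open U"
    and cover: "\<forall>x y z t. (x, y, z) \<in> unit_cube \<and> t \<in> {0<..T} \<longrightarrow> (x, y, z, t) \<in> U"
    and sm: "smooth_on U (\<lambda>(x, y, z, t). m x y z t)"
    and LLG: "\<forall>x y z t. (x, y, z) \<in> unit_cube \<and> t \<in> {0<..T} \<longrightarrow>
         dT m x y z t = - cross3 (m x y z t) (lap m x y z t) + \<alpha> *\<^sub>R lap m x y z t
                        + (\<alpha> * grad_sq m x y z t) *\<^sub>R m x y z t"
    and z0: "z0 \<in> {0..1}"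
    and neu: "\<forall>x y t. x \<in> {0..1} \<and> y \<in> {0..1} \<and> t \<in> {0<..T} \<longrightarrow> dZ m x y z0 t = 0"
  shows "\<forall>x y t. x \<in> {0..1} \<and> y \<in> {0..1} \<and> t \<in> {0<..T} \<longrightarrow> dZ (dZ (dZ m)) x y z0 t = 0"
proof (intro allI impI)
  fix x y t :: real assume xyt: "x \<in> {0..1} \<and> y \<in> {0..1} \<and> t \<in> {0<..T}"
  have inU: "\<And>x y z t. x\<in>{0..1} \<Longrightarrow> y\<in>{0..1} \<Longrightarrow> z\<in>{0..1} \<Longrightarrow> t\<in>{0<..T} \<Longrightarrow> (x,y,z,t) \<in> U"
    using cover by (auto simp: unit_cube_def)
  note U = U_open
  have sX: "smooth_on U (unc (dX m))" using smX[OF U sm] .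
  have sY: "smooth_on U (unc (dY m))" using smY[OF U sm] .
  have sZ: "smooth_on U (unc (dZ m))" using smZ[OF U sm] .
  have sT: "smooth_on U (unc (dT m))" using smT[OF U sm] .
  have sXX: "smooth_on U (unc (dX (dX m)))" using smX[OF U sX] .
  have sYY: "smooth_on U (unc (dY (dY m)))" using smY[OF U sY] .
  have sZZ: "smooth_on U (unc (dZ (dZ m)))" using smZ[OF U sZ] .
  have sZX: "smooth_on U (unc (dZ (dX m)))" using smZ[OF U sX] .
  have sZY: "smooth_on U (unc (dZ (dY m)))" using smZ[OF U sY] .
  have f0: "face0 U T z0 (dZ m)" unfolding face0_def using neu inU z0 by blast
  have fZX: "face0 U T z0 (dZ (dX m))" using face_symX[OF U sm tanX[OF sZ f0]] .
  have fZY: "face0 U T z0 (dZ (dY m))" using face_symY[OF U sm tanY[OF sZ f0]] .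
  have fZT: "face0 U T z0 (dZ (dT m))" using face_symT[OF U sm tanT[OF sZ f0]] .
  have fZXX: "face0 U T z0 (dZ (dX (dX m)))" using face_symX[OF U sX tanX[OF sZX fZX]] .
  have fZYY: "face0 U T z0 (dZ (dY (dY m)))" using face_symY[OF U sY tanY[OF sZY fZY]] .
  have p: "(x,y,z0,t) \<in> U" using inU xyt z0 by blast
  have zero: "dZ m x y z0 t = 0" "dZ (dX m) x y z0 t = 0" "dZ (dY m) x y z0 t = 0"
    "dZ (dT m) x y z0 t = 0" "dZ (dX (dX m)) x y z0 t = 0" "dZ (dY (dY m)) x y z0 t = 0"
    using f0 fZX fZY fZT fZXX fZYY xyt unfolding face0_def by blast+
  define v where "v = dZ (dZ (dZ m)) x y z0 t"
  define M where "M = (\<lambda>s. m x y s t)"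
  define L where "L = (\<lambda>s. lap m x y s t)"
  define G where "G = (\<lambda>s. grad_sq m x y s t)"
  have dM: "(M has_vector_derivative 0) (at z0)" using vdZ[OF sm p] zero unfolding M_def by simp
  have dL: "(L has_vector_derivative v) (at z0)"
  proof -
    have "(L has_vector_derivative dZ (dX (dX m)) x y z0 t + dZ (dY (dY m)) x y z0 t + dZ (dZ (dZ m)) x y z0 t) (at z0)"
      unfolding L_def lap_def
      by (intro has_vector_derivative_add vdZ[OF sXX p] vdZ[OF sYY p] vdZ[OF sZZ p])
    then show ?thesis using zero unfolding v_def by simp
  qed
  have dG: "(G has_real_derivative 0) (at z0)"
  proof -
    have "(G has_vector_derivative
        (dX m x y z0 t \<bullet> dZ (dX m) x y z0 t + dZ (dX m) x y z0 t \<bullet> dX m x y z0 t) +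
        (dY m x y z0 t \<bullet> dZ (dY m) x y z0 t + dZ (dY m) x y z0 t \<bullet> dY m x y z0 t) +
        (dZ m x y z0 t \<bullet> dZ (dZ m) x y z0 t + dZ (dZ m) x y z0 t \<bullet> dZ m x y z0 t)) (at z0)"
      unfolding G_def grad_sq_def
      by (intro has_vector_derivative_add normsq_deriv vdZ[OF sX p] vdZ[OF sY p] vdZ[OF sZ p])
    then show ?thesis using zero by (simp add: has_real_derivative_iff_has_vector_derivative)
  qed
  define R where "R = (\<lambda>s. - cross3 (M s) (L s) + \<alpha> *\<^sub>R L s + (\<alpha> * G s) *\<^sub>R M s)"
  have dR: "(R has_vector_derivative (- (cross3 (M z0) v + cross3 0 (L z0)) + (\<alpha> *\<^sub>R v + 0 *\<^sub>R L z0)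
             + ((\<alpha> * G z0) *\<^sub>R 0 + (\<alpha> * 0) *\<^sub>R M z0))) (at z0)"
    unfolding R_def
    by (intro has_vector_derivative_add has_vector_derivative_minus
          bounded_bilinear.has_vector_derivative[OF bb_cross dM dL]
          has_vector_derivative_scaleR[OF DERIV_const dL]
          has_vector_derivative_scaleR[OF DERIV_cmult[OF dG] dM])
  have dLHS: "((\<lambda>s. dT m x y s t) has_vector_derivative 0) (at z0)"
    using vdZ[OF sT p] zero by simp
  have eqon: "\<forall>s\<in>{0..1}. dT m x y s t = R s"
    using LLG xyt unfolding R_def M_def L_def G_def by (auto simp: unit_cube_def)
  have "0 = - (cross3 (M z0) v + cross3 0 (L z0)) + (\<alpha> *\<^sub>R v + 0 *\<^sub>R L z0)
             + ((\<alpha> * G z0) *\<^sub>R 0 + (\<alpha> * 0) *\<^sub>R M z0)"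
    by (rule onesided_eq[of 0 1 z0, OF _ z0 dLHS dR eqon]) simp
  then have e: "\<alpha> *\<^sub>R v = cross3 (M z0) v" by (simp add: algebra_simps)
  have "\<alpha> * (v \<bullet> v) = v \<bullet> cross3 (M z0) v" using arg_cong[OF e, of "\<lambda>w. v \<bullet> w"] by simp
  also have "\<dots> = 0" by (rule dot_cross_self(2))
  finally have "v \<bullet> v = 0" using alpha_pos by simp
  then show "dZ (dZ (dZ m)) x y z0 t = 0" unfolding v_def by simp
qed

lemma Ck_on_comp_lin:
  assumes P: "bounded_linear P"
  shows "Ck_on k U f \<Longrightarrow> Ck_on k (P -` U) (f \<circ> P)"
proof (induction k arbitrary: f)
  case 0
  have cP: "continuous_on (P -` U) P" using P linear_continuous_on by blast
  have "continuous_on (P ` (P -` U)) f"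
    using 0 continuous_on_subset[of U f "P ` (P -` U)"] by auto
  then show ?case using continuous_on_compose[OF cP] by simp
next
  case (Suc k)
  then obtain f' where f': "\<forall>x\<in>U. (f has_derivative f' x) (at x)" "\<forall>v. Ck_on k U (\<lambda>x. f' x v)"
    by (simp only: Ck_on.simps) blast
  have dP: "\<And>x. (P has_derivative P) (at x)" using P bounded_linear_imp_has_derivative by blast
  have d: "\<forall>x\<in>P -` U. ((f \<circ> P) has_derivative (f' (P x) \<circ> P)) (at x)"
    using diff_chain_at[OF dP] f'(1) by auto
  have c: "\<forall>v. Ck_on k (P -` U) (\<lambda>x. (f' (P x) \<circ> P) v)"
  proof
    fix v
    have "Ck_on k (P -` U) ((\<lambda>y. f' y (P v)) \<circ> P)" using Suc.IH f'(2) by blast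
    then show "Ck_on k (P -` U) (\<lambda>x. (f' (P x) \<circ> P) v)" by (simp add: o_def)
  qed
  show ?case unfolding Ck_on.simps by (rule exI[of _ "\<lambda>x. f' (P x) \<circ> P"]) (use d c in blast)
qed

lemma smooth_comp_lin:
  "bounded_linear P \<Longrightarrow> smooth_on U f \<Longrightarrow> smooth_on (P -` U) (f \<circ> P)"
  unfolding smooth_on_def using Ck_on_comp_lin by blast

definition Pxz :: "real \<times> real \<times> real \<times> real \<Rightarrow> real \<times> real \<times> real \<times> real" where
  "Pxz = (\<lambda>(x,y,z,t). (z,y,x,t))"
definition Pyz :: "real \<times> real \<times> real \<times> real \<Rightarrow> real \<times> real \<times> real \<times> real" where
  "Pyz = (\<lambda>(x,y,z,t). (x,z,y,t))"

lemma lin_Pxz: "bounded_linear Pxz"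
proof -
  have "linear Pxz" unfolding linear_iff Pxz_def by (auto simp: split_beta)
  then show ?thesis using linear_conv_bounded_linear by blast
qed
lemma lin_Pyz: "bounded_linear Pyz"
proof -
  have "linear Pyz" unfolding linear_iff Pyz_def by (auto simp: split_beta)
  then show ?thesis using linear_conv_bounded_linear by blast
qed

definition swxz :: "field4 \<Rightarrow> field4" where "swxz m = (\<lambda>x y z t. m z y x t)"
definition swyz :: "field4 \<Rightarrow> field4" where "swyz m = (\<lambda>x y z t. m x z y t)"

lemma swxz_d: "dX (swxz m) = swxz (dZ m)" "dY (swxz m) = swxz (dY m)"
  "dZ (swxz m) = swxz (dX m)" "dT (swxz m) = swxz (dT m)"
  by (simp_all add: swxz_def dX_def dY_def dZ_def dT_def)
lemma swyz_d: "dX (swyz m) = swyz (dX m)" "dY (swyz m) = swyz (dZ m)"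
  "dZ (swyz m) = swyz (dY m)" "dT (swyz m) = swyz (dT m)"
  by (simp_all add: swyz_def dX_def dY_def dZ_def dT_def)

lemma swxz_lap: "lap (swxz m) = swxz (lap m)"
  by (simp add: lap_def swxz_d) (simp add: swxz_def add_ac)
lemma swyz_lap: "lap (swyz m) = swyz (lap m)"
  by (simp add: lap_def swyz_d) (simp add: swyz_def add_ac)
lemma swxz_gs: "grad_sq (swxz m) x y z t = grad_sq m z y x t"
  by (simp add: grad_sq_def swxz_d) (simp add: swxz_def add_ac)
lemma swyz_gs: "grad_sq (swyz m) x y z t = grad_sq m x z y t"
  by (simp add: grad_sq_def swyz_d) (simp add: swyz_def add_ac)

lemma unc_swxz: "unc (swxz m) = unc m \<circ> Pxz"
  by (auto simp: swxz_def Pxz_def fun_eq_iff)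
lemma unc_swyz: "unc (swyz m) = unc m \<circ> Pyz"
  by (auto simp: swyz_def Pyz_def fun_eq_iff)

lemma open_P: "bounded_linear P \<Longrightarrow> open U \<Longrightarrow> open (P -` U)"
  using open_vimage[of U P] linear_continuous_on by blast

lemma bound_step:
  fixes \<psi> \<psi>' :: "real \<Rightarrow> real^3"
  assumes C: "0 \<le> C" and z: "\<psi> 0 = 0"
    and d: "\<forall>s\<in>{0..\<delta>}. (\<psi> has_vector_derivative \<psi>' s) (at s)"
    and b: "\<forall>s\<in>{0..\<delta>}. norm (\<psi>' s) \<le> C * s ^ k"
  shows "\<forall>s\<in>{0..\<delta>}. norm (\<psi> s) \<le> C * s ^ Suc k"
proof
  fix s assume s: "s \<in> {0..\<delta>}"
  show "norm (\<psi> s) \<le> C * s ^ Suc k"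
  proof (cases "s = 0")
    case True then show ?thesis using z by simp
  next
    case False
    then have s0: "0 < s" using s by auto
    have cont: "continuous_on {0..s} \<psi>"
    proof (rule continuous_at_imp_continuous_on, rule ballI)
      fix u assume "u \<in> {0..s}"
      then have "u \<in> {0..\<delta>}" using s by auto
      then show "isCont \<psi> u" using d has_vector_derivative_continuous by blast
    qed
    have der: "\<And>u. 0 < u \<Longrightarrow> u < s \<Longrightarrow> (\<psi> has_derivative (\<lambda>h. h *\<^sub>R \<psi>' u)) (at u)"
      using d s unfolding has_vector_derivative_def by auto
    obtain u where u: "u \<in> {0<..<s}" "norm (\<psi> s - \<psi> 0) \<le> norm ((s - 0) *\<^sub>R \<psi>' u)"
      using mvt_general[OF s0 cont der] by blast
    have uu: "u \<in> {0..\<delta>}" using u s by auto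
    have "norm (\<psi> s) \<le> s * norm (\<psi>' u)" using u z s0 by simp
    also have "\<dots> \<le> s * (C * u ^ k)" using b uu s0 by (intro mult_left_mono) auto
    also have "\<dots> \<le> s * (C * s ^ k)"
      using u C s0 by (intro mult_left_mono mult_left_mono power_mono) auto
    also have "\<dots> = C * s ^ Suc k" by simp
    finally show ?thesis .
  qed
qed

lemma taylor_part:
  fixes m :: field4
  assumes U: "open U" and sm: "smooth_on U (unc m)" and p: "(x,y,0,t) \<in> U"
    and z1: "dZ m x y 0 t = 0" and z3: "dZ (dZ (dZ m)) x y 0 t = 0"
  shows "(\<lambda>h. norm (m x y (- h / 2) t - m x y (h / 2) t)) \<in> O[at_right 0](\<lambda>h. h ^ 5)"
proof -
  define g where "g j = (dZ ^^ j) m" for j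
  have gS: "g (Suc j) = dZ (g j)" for j by (simp add: g_def)
  have smg: "smooth_on U (unc (g j))" for j
    by (induction j) (auto simp: g_def sm smZ[OF U])
  obtain \<delta> where \<delta>: "\<delta> > 0" "\<forall>s. \<bar>s\<bar> \<le> \<delta> \<longrightarrow> (x,y,0,t) + s *\<^sub>R eZ \<in> U"
    using open_line[OF U p] by blast
  have inU: "(x,y,s,t) \<in> U" if "\<bar>s\<bar> \<le> \<delta>" for s
    using \<delta>(2) that by (simp add: eZ_def)
  have vd: "((\<lambda>s. g j x y s t) has_vector_derivative g (Suc j) x y s0 t) (at s0)" if "\<bar>s0\<bar> \<le> \<delta>" for j s0
    unfolding gS using vdZ[OF smg inU[OF that]] .
  define \<phi> where "\<phi> j s = g j x y s t - ((-1::real) ^ j) *\<^sub>R g j x y (- s) t" for j s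
  have dphi: "(\<phi> j has_vector_derivative \<phi> (Suc j) s) (at s)" if "\<bar>s\<bar> \<le> \<delta>" for j s
  proof -
    have m: "((\<lambda>s. - s) has_vector_derivative (-1)) (at s)"
      using has_vector_derivative_minus[OF has_vector_derivative_id] by simp
    have "(((\<lambda>s. g j x y s t) \<circ> (\<lambda>s. - s)) has_vector_derivative ((-1) *\<^sub>R g (Suc j) x y (- s) t)) (at s)"
      by (rule vector_diff_chain_at[OF m]) (use vd that in simp)
    then have "((\<lambda>s. g j x y (- s) t) has_vector_derivative (- g (Suc j) x y (- s) t)) (at s)"
      by (simp add: o_def)
    from has_vector_derivative_diff[OF vd[OF that] has_vector_derivative_scaleR[OF DERIV_const this]]
    show ?thesis unfolding \<phi>_def by (simp add: algebra_simps)
  qed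
  have cphi: "continuous_on {0..\<delta>} (\<phi> j)" for j
  proof (rule continuous_at_imp_continuous_on, rule ballI)
    fix u assume "u \<in> {0..\<delta>}"
    then have "\<bar>u\<bar> \<le> \<delta>" by auto
    then show "isCont (\<phi> j) u" using has_vector_derivative_continuous[OF dphi] by blast
  qed
  obtain C where C: "\<forall>s\<in>{0..\<delta>}. norm (\<phi> 5 s) \<le> C" "0 \<le> C"
  proof -
    have "compact (\<phi> 5 ` {0..\<delta>})" using compact_continuous_image[OF cphi] by simp
    then obtain B where "\<forall>v\<in>\<phi> 5 ` {0..\<delta>}. norm v \<le> B" using compact_imp_bounded bounded_iff by metis
    then have "\<forall>s\<in>{0..\<delta>}. norm (\<phi> 5 s) \<le> max B 0" by force
    then show ?thesis using that[of "max B 0"] by simp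
  qed
  have b5: "\<forall>s\<in>{0..\<delta>}. norm (\<phi> 5 s) \<le> C * s ^ 0" using C by simp
  have D: "\<forall>s\<in>{0..\<delta>}. (\<phi> j has_vector_derivative \<phi> (Suc j) s) (at s)" for j
    using dphi by auto
  have z0: "\<phi> j 0 = 0" if "j \<in> {0,2,4}" for j
    using that by (auto simp: \<phi>_def)
  have g1: "g 1 = dZ m" "g (Suc 0) = dZ m" by (simp_all add: g_def)
  have z1': "\<phi> 1 0 = 0" by (simp add: \<phi>_def g1 z1)
  have g3: "g 3 = dZ (dZ (dZ m))" "g (Suc (Suc (Suc 0))) = dZ (dZ (dZ m))" by (simp_all add: g_def numeral_3_eq_3)
  have z3': "\<phi> 3 0 = 0" by (simp add: \<phi>_def g3 z3)
  have zz: "\<phi> 0 0 = 0" "\<phi> 2 0 = 0" "\<phi> 4 0 = 0" using z0 by auto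
  have D4: "\<forall>s\<in>{0..\<delta>}. (\<phi> 4 has_vector_derivative \<phi> 5 s) (at s)" using D[of 4] by (simp add: numeral_eq_Suc)
  have D3: "\<forall>s\<in>{0..\<delta>}. (\<phi> 3 has_vector_derivative \<phi> 4 s) (at s)" using D[of 3] by (simp add: numeral_eq_Suc)
  have D2: "\<forall>s\<in>{0..\<delta>}. (\<phi> 2 has_vector_derivative \<phi> 3 s) (at s)" using D[of 2] by (simp add: numeral_eq_Suc)
  have D1: "\<forall>s\<in>{0..\<delta>}. (\<phi> 1 has_vector_derivative \<phi> 2 s) (at s)" using D[of 1] by (simp add: numeral_eq_Suc)
  have D0: "\<forall>s\<in>{0..\<delta>}. (\<phi> 0 has_vector_derivative \<phi> 1 s) (at s)" using D[of 0] by (simp add: numeral_eq_Suc)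
  have b4: "\<forall>s\<in>{0..\<delta>}. norm (\<phi> 4 s) \<le> C * s ^ Suc 0"
    by (rule bound_step[OF C(2) zz(3) D4 b5])
  have b3: "\<forall>s\<in>{0..\<delta>}. norm (\<phi> 3 s) \<le> C * s ^ Suc (Suc 0)"
    by (rule bound_step[OF C(2) z3' D3 b4])
  have b2: "\<forall>s\<in>{0..\<delta>}. norm (\<phi> 2 s) \<le> C * s ^ Suc (Suc (Suc 0))"
    by (rule bound_step[OF C(2) zz(2) D2 b3])
  have b1: "\<forall>s\<in>{0..\<delta>}. norm (\<phi> 1 s) \<le> C * s ^ Suc (Suc (Suc (Suc 0)))"
    by (rule bound_step[OF C(2) z1' D1 b2])
  have b0': "\<forall>s\<in>{0..\<delta>}. norm (\<phi> 0 s) \<le> C * s ^ Suc (Suc (Suc (Suc (Suc 0))))"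
    by (rule bound_step[OF C(2) zz(1) D0 b1])
  have b0: "\<forall>s\<in>{0..\<delta>}. norm (\<phi> 0 s) \<le> C * s ^ 5"
    using b0' by (simp add: numeral_eq_Suc)
  show ?thesis
  proof (rule bigoI[where c = C])
    show "\<forall>\<^sub>F h in at_right 0. norm (norm (m x y (- h / 2) t - m x y (h / 2) t)) \<le> C * norm (h ^ 5)"
      unfolding eventually_at_right_field
    proof (rule exI[of _ "2 * \<delta>"], intro conjI allI impI)
      show "(0::real) < 2 * \<delta>" using \<delta> by simp
      fix h :: real assume h: "0 < h" "h < 2 * \<delta>"
      then have hh: "h / 2 \<in> {0..\<delta>}" by auto
      have "norm (m x y (- h / 2) t - m x y (h / 2) t) = norm (\<phi> 0 (h / 2))"
        by (simp add: \<phi>_def g_def norm_minus_commute)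
      also have "\<dots> \<le> C * (h / 2) ^ 5" using b0 hh by blast
      also have "\<dots> \<le> C * h ^ 5" using h C by (intro mult_left_mono power_mono) auto
      finally show "norm (norm (m x y (- h / 2) t - m x y (h / 2) t)) \<le> C * norm (h ^ 5)"
        using h by simp
    qed
  qed
qed

theorem mainTheorem5:
  fixes m :: field4 and \<alpha> T :: real and U :: "(real \<times> real \<times> real \<times> real) set"
  assumes alpha_pos: "\<alpha> > 0" and T_pos: "T > 0"
    and U_open: "open U"
    and U_cover: "\<forall>x y z t. (x, y, z) \<in> unit_cube \<and> t \<in> {0<..T} \<longrightarrow> (x, y, z, t) \<in> U"
    and smooth: "smooth_on U (\<lambda>(x, y, z, t). m x y z t)"
    and LLG: "\<forall>x y z t. (x, y, z) \<in> unit_cube \<and> t \<in> {0<..T} \<longrightarrow>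
         dT m x y z t = - cross3 (m x y z t) (lap m x y z t) + \<alpha> *\<^sub>R lap m x y z t
                        + (\<alpha> * grad_sq m x y z t) *\<^sub>R m x y z t"
    and neumann_x: "\<forall>y z t. y \<in> {0..1} \<and> z \<in> {0..1} \<and> t \<in> {0<..T} \<longrightarrow>
         dX m 0 y z t = 0 \<and> dX m 1 y z t = 0"
    and neumann_y: "\<forall>x z t. x \<in> {0..1} \<and> z \<in> {0..1} \<and> t \<in> {0<..T} \<longrightarrow>
         dY m x 0 z t = 0 \<and> dY m x 1 z t = 0"
    and neumann_z: "\<forall>x y t. x \<in> {0..1} \<and> y \<in> {0..1} \<and> t \<in> {0<..T} \<longrightarrow>
         dZ m x y 0 t = 0 \<and> dZ m x y 1 t = 0"
    and unit_len: "\<forall>x y z t. (x, y, z) \<in> unit_cube \<and> t \<in> {0<..T} \<longrightarrow> norm (m x y z t) = 1"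
  shows "(\<forall>y z t. y \<in> {0..1} \<and> z \<in> {0..1} \<and> t \<in> {0<..T} \<longrightarrow>
            dX (dX (dX m)) 0 y z t = 0 \<and> dX (dX (dX m)) 1 y z t = 0)
       \<and> (\<forall>x z t. x \<in> {0..1} \<and> z \<in> {0..1} \<and> t \<in> {0<..T} \<longrightarrow>
            dY (dY (dY m)) x 0 z t = 0 \<and> dY (dY (dY m)) x 1 z t = 0)
       \<and> (\<forall>x y t. x \<in> {0..1} \<and> y \<in> {0..1} \<and> t \<in> {0<..T} \<longrightarrow>
            dZ (dZ (dZ m)) x y 0 t = 0 \<and> dZ (dZ (dZ m)) x y 1 t = 0)
       \<and> (\<forall>x y t. x \<in> {0..1} \<and> y \<in> {0..1} \<and> t \<in> {0<..T} \<longrightarrow>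
            (\<lambda>h. norm (m x y (- h / 2) t - m x y (h / 2) t)) \<in> O[at_right 0](\<lambda>h. h ^ 5))"
proof -
  note sm = smooth
  have cube_sw: "\<And>x y z. (x,y,z) \<in> unit_cube \<Longrightarrow> (z,y,x) \<in> unit_cube"
    "\<And>x y z. (x,y,z) \<in> unit_cube \<Longrightarrow> (x,z,y) \<in> unit_cube"
    by (auto simp: unit_cube_def)
  have Zf: "\<forall>x y t. x \<in> {0..1} \<and> y \<in> {0..1} \<and> t \<in> {0<..T} \<longrightarrow> dZ (dZ (dZ m)) x y z0 t = 0"
    if "z0 \<in> {0..1}" "\<forall>x y t. x \<in> {0..1} \<and> y \<in> {0..1} \<and> t \<in> {0<..T} \<longrightarrow> dZ m x y z0 t = 0" for z0
    by (rule core[OF alpha_pos U_open U_cover smooth LLG that])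
  have Z0: "\<forall>x y t. x \<in> {0..1} \<and> y \<in> {0..1} \<and> t \<in> {0<..T} \<longrightarrow> dZ (dZ (dZ m)) x y 0 t = 0"
    by (rule Zf) (use neumann_z in auto)
  have Z1: "\<forall>x y t. x \<in> {0..1} \<and> y \<in> {0..1} \<and> t \<in> {0<..T} \<longrightarrow> dZ (dZ (dZ m)) x y 1 t = 0"
    by (rule Zf) (use neumann_z in auto)
  \<comment> \<open>x faces via swapping x and z\<close>
  have Xf: "\<forall>x y t. x \<in> {0..1} \<and> y \<in> {0..1} \<and> t \<in> {0<..T} \<longrightarrow> dZ (dZ (dZ (swxz m))) x y z0 t = 0"
    if z0: "z0 \<in> {0..1}" and neu: "\<forall>y z t. y \<in> {0..1} \<and> z \<in> {0..1} \<and> t \<in> {0<..T} \<longrightarrow> dX m z0 y z t = 0" for z0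
  proof (rule core[where U = "Pxz -` U", OF alpha_pos open_P[OF lin_Pxz U_open] _ _ _ z0])
    show "\<forall>x y z t. (x, y, z) \<in> unit_cube \<and> t \<in> {0<..T} \<longrightarrow> (x, y, z, t) \<in> Pxz -` U"
    proof (intro allI impI)
      fix x y z t assume a: "(x, y, z) \<in> unit_cube \<and> t \<in> {0<..T}"
      then have "(z,y,x) \<in> unit_cube" using cube_sw by blast
      then have "(z,y,x, t) \<in> U" using U_cover a by blast
      then show "(x, y, z, t) \<in> Pxz -` U" by (simp add: Pxz_def)
    qed
    show "smooth_on (Pxz -` U) (\<lambda>(x, y, z, t). swxz m x y z t)"
      using smooth_comp_lin[OF lin_Pxz sm] unfolding unc_swxz[of m, symmetric] .
    show "\<forall>x y z t. (x, y, z) \<in> unit_cube \<and> t \<in> {0<..T} \<longrightarrow>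
         dT (swxz m) x y z t = - cross3 (swxz m x y z t) (lap (swxz m) x y z t) + \<alpha> *\<^sub>R lap (swxz m) x y z t
                        + (\<alpha> * grad_sq (swxz m) x y z t) *\<^sub>R swxz m x y z t"
    proof (intro allI impI)
      fix x y z t assume a: "(x, y, z) \<in> unit_cube \<and> t \<in> {0<..T}"
      then have eq: "dT m z y x t = - cross3 (m z y x t) (lap m z y x t) + \<alpha> *\<^sub>R lap m z y x t
                        + (\<alpha> * grad_sq m z y x t) *\<^sub>R m z y x t" using LLG cube_sw by blast
      show "dT (swxz m) x y z t = - cross3 (swxz m x y z t) (lap (swxz m) x y z t) + \<alpha> *\<^sub>R lap (swxz m) x y z t
                        + (\<alpha> * grad_sq (swxz m) x y z t) *\<^sub>R swxz m x y z t"
        by (simp only: swxz_d swxz_lap swxz_gs) (simp add: swxz_def eq)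
    qed
    show "\<forall>x y t. x \<in> {0..1} \<and> y \<in> {0..1} \<and> t \<in> {0<..T} \<longrightarrow> dZ (swxz m) x y z0 t = 0"
      using neu by (simp only: swxz_d) (simp add: swxz_def)
  qed
  have Xc: "dX (dX (dX m)) z0 y x t = 0"
    if "z0 \<in> {0..1}" "\<forall>y z t. y \<in> {0..1} \<and> z \<in> {0..1} \<and> t \<in> {0<..T} \<longrightarrow> dX m z0 y z t = 0"
      "x \<in> {0..1}" "y \<in> {0..1}" "t \<in> {0<..T}" for z0 x y t
  proof -
    have "dZ (dZ (dZ (swxz m))) x y z0 t = 0" using Xf[OF that(1,2)] that(3-5) by blast
    then show ?thesis by (simp only: swxz_d) (simp add: swxz_def)
  qed
  \<comment> \<open>y faces via swapping y and z\<close>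
  have Yf: "\<forall>x y t. x \<in> {0..1} \<and> y \<in> {0..1} \<and> t \<in> {0<..T} \<longrightarrow> dZ (dZ (dZ (swyz m))) x y z0 t = 0"
    if z0: "z0 \<in> {0..1}" and neu: "\<forall>x z t. x \<in> {0..1} \<and> z \<in> {0..1} \<and> t \<in> {0<..T} \<longrightarrow> dY m x z0 z t = 0" for z0
  proof (rule core[where U = "Pyz -` U", OF alpha_pos open_P[OF lin_Pyz U_open] _ _ _ z0])
    show "\<forall>x y z t. (x, y, z) \<in> unit_cube \<and> t \<in> {0<..T} \<longrightarrow> (x, y, z, t) \<in> Pyz -` U"
    proof (intro allI impI)
      fix x y z t assume a: "(x, y, z) \<in> unit_cube \<and> t \<in> {0<..T}"
      then have "(x,z,y) \<in> unit_cube" using cube_sw by blast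
      then have "(x,z,y, t) \<in> U" using U_cover a by blast
      then show "(x, y, z, t) \<in> Pyz -` U" by (simp add: Pyz_def)
    qed
    show "smooth_on (Pyz -` U) (\<lambda>(x, y, z, t). swyz m x y z t)"
      using smooth_comp_lin[OF lin_Pyz sm] unfolding unc_swyz[of m, symmetric] .
    show "\<forall>x y z t. (x, y, z) \<in> unit_cube \<and> t \<in> {0<..T} \<longrightarrow>
         dT (swyz m) x y z t = - cross3 (swyz m x y z t) (lap (swyz m) x y z t) + \<alpha> *\<^sub>R lap (swyz m) x y z t
                        + (\<alpha> * grad_sq (swyz m) x y z t) *\<^sub>R swyz m x y z t"
    proof (intro allI impI)
      fix x y z t assume a: "(x, y, z) \<in> unit_cube \<and> t \<in> {0<..T}"
      then have eq: "dT m x z y t = - cross3 (m x z y t) (lap m x z y t) + \<alpha> *\<^sub>R lap m x z y t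
                        + (\<alpha> * grad_sq m x z y t) *\<^sub>R m x z y t" using LLG cube_sw by blast
      show "dT (swyz m) x y z t = - cross3 (swyz m x y z t) (lap (swyz m) x y z t) + \<alpha> *\<^sub>R lap (swyz m) x y z t
                        + (\<alpha> * grad_sq (swyz m) x y z t) *\<^sub>R swyz m x y z t"
        by (simp only: swyz_d swyz_lap swyz_gs) (simp add: swyz_def eq)
    qed
    show "\<forall>x y t. x \<in> {0..1} \<and> y \<in> {0..1} \<and> t \<in> {0<..T} \<longrightarrow> dZ (swyz m) x y z0 t = 0"
      using neu by (simp only: swyz_d) (simp add: swyz_def)
  qed
  have Yc: "dY (dY (dY m)) x z0 y t = 0"
    if "z0 \<in> {0..1}" "\<forall>x z t. x \<in> {0..1} \<and> z \<in> {0..1} \<and> t \<in> {0<..T} \<longrightarrow> dY m x z0 z t = 0"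
      "x \<in> {0..1}" "y \<in> {0..1}" "t \<in> {0<..T}" for z0 x y t
  proof -
    have "dZ (dZ (dZ (swyz m))) x y z0 t = 0" using Yf[OF that(1,2)] that(3-5) by blast
    then show ?thesis by (simp only: swyz_d) (simp add: swyz_def)
  qed
  have nx0: "\<forall>y z t. y \<in> {0..1} \<and> z \<in> {0..1} \<and> t \<in> {0<..T} \<longrightarrow> dX m 0 y z t = 0"
    and nx1: "\<forall>y z t. y \<in> {0..1} \<and> z \<in> {0..1} \<and> t \<in> {0<..T} \<longrightarrow> dX m 1 y z t = 0"
    using neumann_x by auto
  have ny0: "\<forall>x z t. x \<in> {0..1} \<and> z \<in> {0..1} \<and> t \<in> {0<..T} \<longrightarrow> dY m x 0 z t = 0"
    and ny1: "\<forall>x z t. x \<in> {0..1} \<and> z \<in> {0..1} \<and> t \<in> {0<..T} \<longrightarrow> dY m x 1 z t = 0"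
    using neumann_y by auto
  have T4: "(\<lambda>h. norm (m x y (- h / 2) t - m x y (h / 2) t)) \<in> O[at_right 0](\<lambda>h. h ^ 5)"
    if "x \<in> {0..1}" "y \<in> {0..1}" "t \<in> {0<..T}" for x y t
  proof (rule taylor_part[OF U_open sm])
    show "(x, y, 0, t) \<in> U" using U_cover that by (auto simp: unit_cube_def)
    show "dZ m x y 0 t = 0" using neumann_z that by auto
    show "dZ (dZ (dZ m)) x y 0 t = 0" using Z0 that by auto
  qed
  have i01: "(0::real) \<in> {0..1}" "(1::real) \<in> {0..1}" by auto
  show ?thesis
  proof (intro conjI allI impI)
    fix y z t :: real assume a: "y \<in> {0..1} \<and> z \<in> {0..1} \<and> t \<in> {0<..T}"
    show "dX (dX (dX m)) 0 y z t = 0" using Xc[OF i01(1) nx0] a by blast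
    show "dX (dX (dX m)) 1 y z t = 0" using Xc[OF i01(2) nx1] a by blast
  next
    fix x z t :: real assume a: "x \<in> {0..1} \<and> z \<in> {0..1} \<and> t \<in> {0<..T}"
    show "dY (dY (dY m)) x 0 z t = 0" using Yc[OF i01(1) ny0] a by blast
    show "dY (dY (dY m)) x 1 z t = 0" using Yc[OF i01(2) ny1] a by blast
  next
    fix x y t :: real assume a: "x \<in> {0..1} \<and> y \<in> {0..1} \<and> t \<in> {0<..T}"
    show "dZ (dZ (dZ m)) x y 0 t = 0" using Z0 a by blast
    show "dZ (dZ (dZ m)) x y 1 t = 0" using Z1 a by blast
  next
    fix x y t :: real assume a: "x \<in> {0..1} \<and> y \<in> {0..1} \<and> t \<in> {0<..T}"
    show "(\<lambda>h. norm (m x y (- h / 2) t - m x y (h / 2) t)) \<in> O[at_right 0](\<lambda>h. h ^ 5)"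
      using T4 a by blast
  qed
qed

end
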